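(* Let $(X,\rho)$ be a symmetric rack and let $S=\{S_x \mid x\in X\}$ be a family of sets. Suppose that for all $x,y\in X$ we are given maps $\alpha_{x,y}: S_x\times S_y\to S_{x*y}$ and $\beta_x: S_x\to S_{\rho(x)}$; for $t\in S_y$ write $\alpha_{x,y}(t):S_x\to S_{x*y}$ for the map $s\mapsto \alpha_{x,y}(s,t)$. Let $X\times S=\{(x,s)\mid x\in X,\ s\in S_x\}$ with the binary operation $$(x,s)*(y,t)=\big(x*y,\ \alpha_{x,y}(s,t)\big)$$ and the map $\rho_{\alpha,\beta}:X\times S\to X\times S$, $\rho_{\alpha,\beta}(x,s)=\big(\rho(x),\beta_x(s)\big)$. Then $X\times S$ with this operation is a symmetric rack with good involution $\rho_{\alpha,\beta}$ if and only if for all $x,y,z\in X$, $s\in S_x$, $t\in S_y$, $w\in S_z$: (1) $\alpha_{x,y}(t):S_x\to S_{x*y}$ is a bijection; (2) $\alpha_{x*y,z}\big(\alpha_{x,y}(s,t),w\big)=\alpha_{x*z,y*z}\big(\alpha_{x,z}(s,w),\alpha_{y,z}(t,w)\big)$; (3) $\alpha_{\rho(x),y}\big(\beta_x(s),t\big)=\beta_{x*y}\big(\alpha_{x,y}(s,t)\big)$; (4) $\beta_{\rho(x)}\beta_x(s)=s$; (5) $\alpha_{x,\rho(y)}(\beta_y(t))(s)=\big(\alpha_{x*^{-1}y,y}(t)\big)^{-1}(s)$. Furthermore, if $(X,\rho)$ is a symmetric quandle, then $X\times S$ is a symmetric quandle (with this operation and involution) if and only if (1)–(5) hold and additionally (6)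 $\alpha_{x,x}(s,s)=s$ for all $x\in X$, $s\in S_x$.
   Context: A rack is a set $X$ with a binary operation $*$ such that for every $y\in X$ the map $x\mapsto x*y$ is a bijection of $X$ (its inverse is written $x\mapsto x*^{-1}y$) and $(x*y)*z=(x*z)*(y*z)$ for all $x,y,z$. A quandle is a rack with $x*x=x$ for all $x$. A good involution of a rack (quandle) $X$ is a map $\rho:X\to X$ with $\rho^2=\mathrm{id}_X$, $\rho(x*y)=\rho(x)*y$ and $x*\rho(y)=x*^{-1}y$ for all $x,y\in X$; the pair $(X,\rho)$ is then called a symmetric rack (symmetric quandle). *)

theory Defs
  imports Main
begin

definition rack :: "'a set \<Rightarrow> ('a \<Rightarrow> 'a \<Rightarrow> 'a) \<Rightarrow> bool" where
  "rack X m \<longleftrightarrow>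
     (\<forall>x\<in>X. \<forall>y\<in>X. m x y \<in> X) \<and>
     (\<forall>y\<in>X. bij_betw (\<lambda>x. m x y) X X) \<and>
     (\<forall>x\<in>X. \<forall>y\<in>X. \<forall>z\<in>X. m (m x y) z = m (m x z) (m y z))"

definition rinv :: "'a set \<Rightarrow> ('a \<Rightarrow> 'a \<Rightarrow> 'a) \<Rightarrow> 'a \<Rightarrow> 'a \<Rightarrow> 'a" where
  "rinv X m x y = the_inv_into X (\<lambda>z. m z y) x"

definition quandle :: "'a set \<Rightarrow> ('a \<Rightarrow> 'a \<Rightarrow> 'a) \<Rightarrow> bool" where
  "quandle X m \<longleftrightarrow> rack X m \<and> (\<forall>x\<in>X. m x x = x)"

definition good_involution :: "'a set \<Rightarrow> ('a \<Rightarrow> 'a \<Rightarrow> 'a) \<Rightarrow> ('a \<Rightarrow> 'a) \<Rightarrow> bool" where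
  "good_involution X m \<rho> \<longleftrightarrow>
     (\<forall>x\<in>X. \<rho> x \<in> X \<and> \<rho> (\<rho> x) = x) \<and>
     (\<forall>x\<in>X. \<forall>y\<in>X. \<rho> (m x y) = m (\<rho> x) y \<and> m x (\<rho> y) = rinv X m x y)"

definition symmetric_rack :: "'a set \<Rightarrow> ('a \<Rightarrow> 'a \<Rightarrow> 'a) \<Rightarrow> ('a \<Rightarrow> 'a) \<Rightarrow> bool" where
  "symmetric_rack X m \<rho> \<longleftrightarrow> rack X m \<and> good_involution X m \<rho>"

definition symmetric_quandle :: "'a set \<Rightarrow> ('a \<Rightarrow> 'a \<Rightarrow> 'a) \<Rightarrow> ('a \<Rightarrow> 'a) \<Rightarrow> bool" where
  "symmetric_quandle X m \<rho> \<longleftrightarrow> quandle X m \<and> good_involution X m \<rho>"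

definition ext_op :: "('a \<Rightarrow> 'a \<Rightarrow> 'a) \<Rightarrow> ('a \<Rightarrow> 'a \<Rightarrow> 'b \<Rightarrow> 'b \<Rightarrow> 'b)
    \<Rightarrow> 'a \<times> 'b \<Rightarrow> 'a \<times> 'b \<Rightarrow> 'a \<times> 'b" where
  "ext_op m \<alpha> p q = (m (fst p) (fst q), \<alpha> (fst p) (fst q) (snd p) (snd q))"

definition ext_inv :: "('a \<Rightarrow> 'a) \<Rightarrow> ('a \<Rightarrow> 'b \<Rightarrow> 'b) \<Rightarrow> 'a \<times> 'b \<Rightarrow> 'a \<times> 'b" where
  "ext_inv \<rho> \<beta> p = (\<rho> (fst p), \<beta> (fst p) (snd p))"

definition ext_conditions :: "'a set \<Rightarrow> ('a \<Rightarrow> 'a \<Rightarrow> 'a) \<Rightarrow> ('a \<Rightarrow> 'a) \<Rightarrow> ('a \<Rightarrow> 'b set)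
    \<Rightarrow> ('a \<Rightarrow> 'a \<Rightarrow> 'b \<Rightarrow> 'b \<Rightarrow> 'b) \<Rightarrow> ('a \<Rightarrow> 'b \<Rightarrow> 'b) \<Rightarrow> bool" where
  "ext_conditions X m \<rho> S \<alpha> \<beta> \<longleftrightarrow>
     (\<forall>x\<in>X. \<forall>y\<in>X. \<forall>t\<in>S y. bij_betw (\<lambda>s. \<alpha> x y s t) (S x) (S (m x y))) \<and>
     (\<forall>x\<in>X. \<forall>y\<in>X. \<forall>z\<in>X. \<forall>s\<in>S x. \<forall>t\<in>S y. \<forall>w\<in>S z.
        \<alpha> (m x y) z (\<alpha> x y s t) w = \<alpha> (m x z) (m y z) (\<alpha> x z s w) (\<alpha> y z t w)) \<and>
     (\<forall>x\<in>X. \<forall>y\<in>X. \<forall>s\<in>S x. \<forall>t\<in>S y. \<alpha> (\<rho> x) y (\<beta> x s) t = \<beta> (m x y) (\<alpha> x y s t)) \<and>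
     (\<forall>x\<in>X. \<forall>s\<in>S x. \<beta> (\<rho> x) (\<beta> x s) = s) \<and>
     (\<forall>x\<in>X. \<forall>y\<in>X. \<forall>s\<in>S x. \<forall>t\<in>S y.
        \<alpha> x (\<rho> y) s (\<beta> y t) = the_inv_into (S (rinv X m x y)) (\<lambda>u. \<alpha> (rinv X m x y) y u t) s)"

end

theory Submission
  imports Defs
begin

lemma rack_bij: "rack X m \<Longrightarrow> y \<in> X \<Longrightarrow> bij_betw (\<lambda>x. m x y) X X"
  unfolding rack_def by blast

lemma rack_distr: "rack X m \<Longrightarrow> x \<in> X \<Longrightarrow> y \<in> X \<Longrightarrow> z \<in> X \<Longrightarrow> m (m x y) z = m (m x z) (m y z)"
  unfolding rack_def by blast

lemma gi_facts: assumes "good_involution X m r" "x \<in> X" "y \<in> X"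
  shows "r x \<in> X" "r (r x) = x" "r (m x y) = m (r x) y" "m x (r y) = rinv X m x y"
  using assms unfolding good_involution_def by blast+

lemma rack_facts:
  assumes "rack X m" "x \<in> X" "y \<in> X"
  shows "m x y \<in> X" "rinv X m x y \<in> X" "m (rinv X m x y) y = x"
    "rinv X m (m x y) y = x" "inj_on (\<lambda>z. m z y) X"
proof -
  have b: "bij_betw (\<lambda>z. m z y) X X" using assms unfolding rack_def by blast
  show "m x y \<in> X" using assms unfolding rack_def by blast
  show "inj_on (\<lambda>z. m z y) X" using b bij_betw_imp_inj_on by blast
  show "rinv X m x y \<in> X" unfolding rinv_def
    using b assms(2) by (metis bij_betw_def subset_refl the_inv_into_into)
  show "m (rinv X m x y) y = x" unfolding rinv_def
    using b assms(2) f_the_inv_into_f_bij_betw[of "\<lambda>z. m z y" X X x] by blast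
  show "rinv X m (m x y) y = x" unfolding rinv_def
    using b assms(2) bij_betw_imp_inj_on the_inv_into_f_f by fast
qed

lemma dir_forward:
  assumes sym: "symmetric_rack X m \<rho>"
    and alpha_maps: "\<And>x y s t. x \<in> X \<Longrightarrow> y \<in> X \<Longrightarrow> s \<in> S x \<Longrightarrow> t \<in> S y \<Longrightarrow> \<alpha> x y s t \<in> S (m x y)"
    and beta_maps: "\<And>x s. x \<in> X \<Longrightarrow> s \<in> S x \<Longrightarrow> \<beta> x s \<in> S (\<rho> x)"
    and E: "symmetric_rack (Sigma X S) (ext_op m \<alpha>) (ext_inv \<rho> \<beta>)"
  shows "ext_conditions X m \<rho> S \<alpha> \<beta>"
proof -
  have rX: "rack X m" and gX: "good_involution X m \<rho>" using sym unfolding symmetric_rack_def by auto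
  have rE: "rack (Sigma X S) (ext_op m \<alpha>)" and gE: "good_involution (Sigma X S) (ext_op m \<alpha>) (ext_inv \<rho> \<beta>)"
    using E unfolding symmetric_rack_def by auto
  have c1: "bij_betw (\<lambda>s. \<alpha> x y s t) (S x) (S (m x y))" if xy: "x \<in> X" "y \<in> X" "t \<in> S y" for x y t
  proof -
    have bE: "bij_betw (\<lambda>p. ext_op m \<alpha> p (y,t)) (Sigma X S) (Sigma X S)"
      using rack_bij[OF rE, of "(y,t)"] xy by simp
    have inj: "inj_on (\<lambda>s. \<alpha> x y s t) (S x)"
    proof (rule inj_onI)
      fix s s' assume "s \<in> S x" "s' \<in> S x" "\<alpha> x y s t = \<alpha> x y s' t"
      then have "ext_op m \<alpha> (x,s) (y,t) = ext_op m \<alpha> (x,s') (y,t)" by (simp add: ext_op_def)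
      moreover have "(x,s) \<in> Sigma X S" "(x,s') \<in> Sigma X S" using \<open>s \<in> S x\<close> \<open>s' \<in> S x\<close> xy by auto
      ultimately show "s = s'" using bE unfolding bij_betw_def inj_on_def by blast
    qed
    have "(\<lambda>s. \<alpha> x y s t) ` S x = S (m x y)"
    proof
      show "(\<lambda>s. \<alpha> x y s t) ` S x \<subseteq> S (m x y)" using alpha_maps[OF xy(1,2) _ xy(3)] by blast
      show "S (m x y) \<subseteq> (\<lambda>s. \<alpha> x y s t) ` S x"
      proof
        fix u assume u: "u \<in> S (m x y)"
        have "(m x y, u) \<in> Sigma X S" using u rack_facts(1)[OF rX xy(1,2)] by (rule SigmaI[rotated])
        then obtain p where p: "p \<in> Sigma X S" "ext_op m \<alpha> p (y,t) = (m x y, u)"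
        proof -
          have "(m x y, u) \<in> (\<lambda>p. ext_op m \<alpha> p (y,t)) ` Sigma X S"
            using bij_betw_imp_surj_on[OF bE] \<open>(m x y, u) \<in> Sigma X S\<close> by (simp only:)
          then obtain p0 where p0: "(m x y, u) = ext_op m \<alpha> p0 (y,t)" "p0 \<in> Sigma X S" by (rule imageE)
          show ?thesis by (rule that[OF p0(2) p0(1)[symmetric]])
        qed
        obtain x' s' where ps: "p = (x',s')" "x' \<in> X" "s' \<in> S x'" using p(1) by auto
        have "m x' y = m x y" "\<alpha> x' y s' t = u" using p(2) ps by (auto simp: ext_op_def)
        then have "x' = x" using inj_onD[OF rack_facts(5)[OF rX xy(1,2)], of x' x] ps(2) xy(1) by simp
        then have "u = \<alpha> x y s' t" "s' \<in> S x" using ps(3) \<open>\<alpha> x' y s' t = u\<close> by simp_all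
        then show "u \<in> (\<lambda>s. \<alpha> x y s t) ` S x" by (rule image_eqI)
      qed
    qed
    then show ?thesis by (rule bij_betw_imageI[OF inj])
  qed
  have c2: "\<alpha> (m x y) z (\<alpha> x y s t) w = \<alpha> (m x z) (m y z) (\<alpha> x z s w) (\<alpha> y z t w)"
    if "x \<in> X" "y \<in> X" "z \<in> X" "s \<in> S x" "t \<in> S y" "w \<in> S z" for x y z s t w
  proof -
    have "(x,s) \<in> Sigma X S" "(y,t) \<in> Sigma X S" "(z,w) \<in> Sigma X S" using that by simp_all
    from rack_distr[OF rE this]
    show ?thesis by (simp add: ext_op_def)
  qed
  have c3: "\<alpha> (\<rho> x) y (\<beta> x s) t = \<beta> (m x y) (\<alpha> x y s t)"
    if "x \<in> X" "y \<in> X" "s \<in> S x" "t \<in> S y" for x y s t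
  proof -
    have "(x,s) \<in> Sigma X S" "(y,t) \<in> Sigma X S" using that by simp_all
    from gi_facts(3)[OF gE this]
    show ?thesis by (simp add: ext_op_def ext_inv_def)
  qed
  have c4: "\<beta> (\<rho> x) (\<beta> x s) = s" if "x \<in> X" "s \<in> S x" for x s
  proof -
    have "(x,s) \<in> Sigma X S" using that by simp
    from gi_facts(2)[OF gE this this]
    show ?thesis by (simp add: ext_inv_def)
  qed
  have c5: "\<alpha> x (\<rho> y) s (\<beta> y t) = the_inv_into (S (rinv X m x y)) (\<lambda>u. \<alpha> (rinv X m x y) y u t) s"
    if xy: "x \<in> X" "y \<in> X" "s \<in> S x" "t \<in> S y" for x y s t
  proof -
    have ps: "(x,s) \<in> Sigma X S" "(y,t) \<in> Sigma X S" using xy by simp_all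
    have bE: "bij_betw (\<lambda>p. ext_op m \<alpha> p (y,t)) (Sigma X S) (Sigma X S)"
      by (rule rack_bij[OF rE ps(2)])
    have ry: "\<rho> y \<in> X" by (rule gi_facts(1)[OF gX xy(2) xy(2)])
    have eq: "ext_op m \<alpha> (x,s) (ext_inv \<rho> \<beta> (y,t)) = rinv (Sigma X S) (ext_op m \<alpha>) (x,s) (y,t)"
      by (rule gi_facts(4)[OF gE ps])
    have "ext_op m \<alpha> (rinv (Sigma X S) (ext_op m \<alpha>) (x,s) (y,t)) (y,t) = (x,s)"
      unfolding rinv_def by (rule f_the_inv_into_f_bij_betw[OF bE ps(1)])
    then have F: "ext_op m \<alpha> (ext_op m \<alpha> (x,s) (ext_inv \<rho> \<beta> (y,t))) (y,t) = (x,s)" by (simp only: eq)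
    define x' where "x' = rinv X m x y"
    have x'e: "m x (\<rho> y) = x'" unfolding x'_def by (rule gi_facts(4)[OF gX xy(1,2)])
    define c where "c = \<alpha> x (\<rho> y) s (\<beta> y t)"
    have cS: "c \<in> S x'" unfolding c_def using alpha_maps[OF xy(1) ry xy(3) beta_maps[OF xy(2,4)]] x'e by simp
    have cs: "\<alpha> x' y c t = s" using F x'e unfolding c_def by (simp add: ext_op_def ext_inv_def)
    have x'X: "x' \<in> X" unfolding x'_def by (rule rack_facts(2)[OF rX xy(1,2)])
    have "the_inv_into (S x') (\<lambda>u. \<alpha> x' y u t) s = c"
      by (rule the_inv_into_f_eq[OF bij_betw_imp_inj_on[OF c1[OF x'X xy(2,4)]] cs cS])
    then show ?thesis unfolding c_def x'_def by simp
  qed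
  show ?thesis unfolding ext_conditions_def
    by (intro conjI ballI c1 c2 c3 c4 c5; assumption)
qed

lemma dir_backward:
  assumes sym: "symmetric_rack X m \<rho>"
    and alpha_maps: "\<And>x y s t. x \<in> X \<Longrightarrow> y \<in> X \<Longrightarrow> s \<in> S x \<Longrightarrow> t \<in> S y \<Longrightarrow> \<alpha> x y s t \<in> S (m x y)"
    and beta_maps: "\<And>x s. x \<in> X \<Longrightarrow> s \<in> S x \<Longrightarrow> \<beta> x s \<in> S (\<rho> x)"
    and C: "ext_conditions X m \<rho> S \<alpha> \<beta>"
  shows "symmetric_rack (Sigma X S) (ext_op m \<alpha>) (ext_inv \<rho> \<beta>)"
proof -
  have rX: "rack X m" and gX: "good_involution X m \<rho>" using sym unfolding symmetric_rack_def by auto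
  note CC = C[unfolded ext_conditions_def]
  have C1: "\<forall>x\<in>X. \<forall>y\<in>X. \<forall>t\<in>S y. bij_betw (\<lambda>s. \<alpha> x y s t) (S x) (S (m x y))"
    using CC by (elim conjE) assumption
  have C2: "\<forall>x\<in>X. \<forall>y\<in>X. \<forall>z\<in>X. \<forall>s\<in>S x. \<forall>t\<in>S y. \<forall>w\<in>S z.
        \<alpha> (m x y) z (\<alpha> x y s t) w = \<alpha> (m x z) (m y z) (\<alpha> x z s w) (\<alpha> y z t w)"
    using CC by (elim conjE) assumption
  have C3: "\<forall>x\<in>X. \<forall>y\<in>X. \<forall>s\<in>S x. \<forall>t\<in>S y. \<alpha> (\<rho> x) y (\<beta> x s) t = \<beta> (m x y) (\<alpha> x y s t)"
    using CC by (elim conjE) assumption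
  have C4: "\<forall>x\<in>X. \<forall>s\<in>S x. \<beta> (\<rho> x) (\<beta> x s) = s"
    using CC by (elim conjE) assumption
  have C5: "\<forall>x\<in>X. \<forall>y\<in>X. \<forall>s\<in>S x. \<forall>t\<in>S y.
        \<alpha> x (\<rho> y) s (\<beta> y t) = the_inv_into (S (rinv X m x y)) (\<lambda>u. \<alpha> (rinv X m x y) y u t) s"
    using CC by (elim conjE) assumption
  note c1 = C1[rule_format] and c2 = C2[rule_format] and c3 = C3[rule_format]
    and c4 = C4[rule_format] and c5 = C5[rule_format]
  have closed: "ext_op m \<alpha> p q \<in> Sigma X S" if hp: "p \<in> Sigma X S" "q \<in> Sigma X S" for p q
  proof -
    obtain x s where p: "p = (x,s)" "x \<in> X" "s \<in> S x" using hp(1) by blast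
    obtain y t where q: "q = (y,t)" "y \<in> X" "t \<in> S y" using hp(2) by blast
    have "m x y \<in> X" by (rule rack_facts(1)[OF rX p(2) q(2)])
    moreover have "\<alpha> x y s t \<in> S (m x y)" by (rule alpha_maps[OF p(2) q(2) p(3) q(3)])
    ultimately show ?thesis unfolding p q ext_op_def by simp
  qed
  have bij: "bij_betw (\<lambda>p. ext_op m \<alpha> p q) (Sigma X S) (Sigma X S)" if q: "q \<in> Sigma X S" for q
  proof -
    obtain y t where qq: "q = (y,t)" "y \<in> X" "t \<in> S y" using q by blast
    have inj: "inj_on (\<lambda>p. ext_op m \<alpha> p q) (Sigma X S)"
    proof (rule inj_onI)
      fix p p' assume p: "p \<in> Sigma X S" "p' \<in> Sigma X S" "ext_op m \<alpha> p q = ext_op m \<alpha> p' q"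
      obtain x s where pp: "p = (x,s)" "x \<in> X" "s \<in> S x" using p(1) by blast
      obtain x' s' where pp': "p' = (x',s')" "x' \<in> X" "s' \<in> S x'" using p(2) by blast
      have e: "m x y = m x' y" "\<alpha> x y s t = \<alpha> x' y s' t" using p(3) unfolding pp pp' qq ext_op_def by simp_all
      have xx: "x = x'" using inj_onD[OF rack_facts(5)[OF rX pp(2) qq(2)], of x x'] e(1) pp(2) pp'(2) by simp
      have "s = s'" using inj_onD[OF bij_betw_imp_inj_on[OF c1[OF pp(2) qq(2,3)]], of s s'] e(2) pp(3) pp'(3) xx
        by simp
      then show "p = p'" using xx pp(1) pp'(1) by simp
    qed
    have "(\<lambda>p. ext_op m \<alpha> p q) ` Sigma X S = Sigma X S"
    proof
      show "(\<lambda>p. ext_op m \<alpha> p q) ` Sigma X S \<subseteq> Sigma X S" using closed[OF _ q] by blast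
      show "Sigma X S \<subseteq> (\<lambda>p. ext_op m \<alpha> p q) ` Sigma X S"
      proof
        fix r assume r: "r \<in> Sigma X S"
        obtain z u where rr: "r = (z,u)" "z \<in> X" "u \<in> S z" using r by blast
        define x where "x = rinv X m z y"
        have xX: "x \<in> X" unfolding x_def by (rule rack_facts(2)[OF rX rr(2) qq(2)])
        have mx: "m x y = z" unfolding x_def by (rule rack_facts(3)[OF rX rr(2) qq(2)])
        have "u \<in> (\<lambda>s. \<alpha> x y s t) ` S x" using bij_betw_imp_surj_on[OF c1[OF xX qq(2,3)]] mx rr(3) by simp
        then obtain s where s: "u = \<alpha> x y s t" "s \<in> S x" by (rule imageE)
        have "r = ext_op m \<alpha> (x,s) q" using s mx qq rr by (simp add: ext_op_def)
        moreover have "(x,s) \<in> Sigma X S" using xX s by simp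
        ultimately show "r \<in> (\<lambda>p. ext_op m \<alpha> p q) ` Sigma X S" by (rule image_eqI)
      qed
    qed
    then show ?thesis by (rule bij_betw_imageI[OF inj])
  qed
  have distr: "ext_op m \<alpha> (ext_op m \<alpha> p q) r = ext_op m \<alpha> (ext_op m \<alpha> p r) (ext_op m \<alpha> q r)"
    if hp: "p \<in> Sigma X S" "q \<in> Sigma X S" "r \<in> Sigma X S" for p q r
  proof -
    obtain x s where p: "p = (x,s)" "x \<in> X" "s \<in> S x" using hp(1) by blast
    obtain y t where q: "q = (y,t)" "y \<in> X" "t \<in> S y" using hp(2) by blast
    obtain z w where r: "r = (z,w)" "z \<in> X" "w \<in> S z" using hp(3) by blast
    have "m (m x y) z = m (m x z) (m y z)" by (rule rack_distr[OF rX p(2) q(2) r(2)])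
    moreover have "\<alpha> (m x y) z (\<alpha> x y s t) w = \<alpha> (m x z) (m y z) (\<alpha> x z s w) (\<alpha> y z t w)"
      by (rule c2[OF p(2) q(2) r(2) p(3) q(3) r(3)])
    ultimately show ?thesis unfolding p q r ext_op_def by simp
  qed
  have rE: "rack (Sigma X S) (ext_op m \<alpha>)" unfolding rack_def
    by (intro conjI ballI closed bij distr; assumption)
  have g1a: "ext_inv \<rho> \<beta> p \<in> Sigma X S" and g1b: "ext_inv \<rho> \<beta> (ext_inv \<rho> \<beta> p) = p"
    if hp: "p \<in> Sigma X S" for p
  proof -
    obtain x s where p: "p = (x,s)" "x \<in> X" "s \<in> S x" using hp by blast
    have "\<rho> x \<in> X" "\<rho> (\<rho> x) = x" using gi_facts(1,2)[OF gX p(2) p(2)] by simp_all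
    moreover have "\<beta> (\<rho> x) (\<beta> x s) = s" by (rule c4[OF p(2,3)])
    moreover have "\<beta> x s \<in> S (\<rho> x)" by (rule beta_maps[OF p(2,3)])
    ultimately show "ext_inv \<rho> \<beta> p \<in> Sigma X S" "ext_inv \<rho> \<beta> (ext_inv \<rho> \<beta> p) = p"
      unfolding p ext_inv_def by simp_all
  qed
  have g2: "ext_inv \<rho> \<beta> (ext_op m \<alpha> p q) = ext_op m \<alpha> (ext_inv \<rho> \<beta> p) q"
    if hp: "p \<in> Sigma X S" "q \<in> Sigma X S" for p q
  proof -
    obtain x s where p: "p = (x,s)" "x \<in> X" "s \<in> S x" using hp(1) by blast
    obtain y t where q: "q = (y,t)" "y \<in> X" "t \<in> S y" using hp(2) by blast
    have "\<rho> (m x y) = m (\<rho> x) y" by (rule gi_facts(3)[OF gX p(2) q(2)])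
    moreover have "\<alpha> (\<rho> x) y (\<beta> x s) t = \<beta> (m x y) (\<alpha> x y s t)" by (rule c3[OF p(2) q(2) p(3) q(3)])
    ultimately show ?thesis unfolding p q ext_op_def ext_inv_def by simp
  qed
  have g3: "ext_op m \<alpha> p (ext_inv \<rho> \<beta> q) = rinv (Sigma X S) (ext_op m \<alpha>) p q"
    if hp: "p \<in> Sigma X S" "q \<in> Sigma X S" for p q
  proof -
    obtain x s where p: "p = (x,s)" "x \<in> X" "s \<in> S x" using hp(1) by blast
    obtain y t where q: "q = (y,t)" "y \<in> X" "t \<in> S y" using hp(2) by blast
    define x' where "x' = rinv X m x y"
    have x'X: "x' \<in> X" unfolding x'_def by (rule rack_facts(2)[OF rX p(2) q(2)])
    have mx: "m x' y = x" unfolding x'_def by (rule rack_facts(3)[OF rX p(2) q(2)])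
    have x'e: "m x (\<rho> y) = x'" unfolding x'_def by (rule gi_facts(4)[OF gX p(2) q(2)])
    have b: "bij_betw (\<lambda>u. \<alpha> x' y u t) (S x') (S x)" using c1[OF x'X q(2,3)] mx by simp
    define s' where "s' = the_inv_into (S x') (\<lambda>u. \<alpha> x' y u t) s"
    have s'e: "\<alpha> x (\<rho> y) s (\<beta> y t) = s'" unfolding s'_def x'_def by (rule c5[OF p(2) q(2) p(3) q(3)])
    have s'S: "s' \<in> S x'" unfolding s'_def
      by (rule the_inv_into_into[OF bij_betw_imp_inj_on[OF b] _ order_refl]) (simp add: bij_betw_imp_surj_on[OF b] p(3))
    have s's: "\<alpha> x' y s' t = s" unfolding s'_def by (rule f_the_inv_into_f_bij_betw[OF b p(3)])
    have lhs: "ext_op m \<alpha> p (ext_inv \<rho> \<beta> q) = (x', s')" unfolding p q ext_op_def ext_inv_def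
      using x'e s'e by simp
    have "the_inv_into (Sigma X S) (\<lambda>z. ext_op m \<alpha> z q) p = (x', s')"
    proof (rule the_inv_into_f_eq)
      show "inj_on (\<lambda>z. ext_op m \<alpha> z q) (Sigma X S)" by (rule bij_betw_imp_inj_on[OF bij[OF hp(2)]])
      show "ext_op m \<alpha> (x', s') q = p" unfolding p q ext_op_def using mx s's by simp
      show "(x', s') \<in> Sigma X S" using x'X s'S by simp
    qed
    then show ?thesis using lhs unfolding rinv_def by simp
  qed
  have gE: "good_involution (Sigma X S) (ext_op m \<alpha>) (ext_inv \<rho> \<beta>)"
    unfolding good_involution_def by (intro conjI ballI g1a g1b g2 g3; assumption)
  show ?thesis unfolding symmetric_rack_def by (intro conjI rE gE)
qed

theorem proposition3p1:
  fixes X :: "'a set" and m :: "'a \<Rightarrow> 'a \<Rightarrow> 'a" and \<rho> :: "'a \<Rightarrow> 'a"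
    and S :: "'a \<Rightarrow> 'b set" and \<alpha> :: "'a \<Rightarrow> 'a \<Rightarrow> 'b \<Rightarrow> 'b \<Rightarrow> 'b" and \<beta> :: "'a \<Rightarrow> 'b \<Rightarrow> 'b"
  assumes sym: "symmetric_rack X m \<rho>"
    and alpha_maps: "\<And>x y s t. x \<in> X \<Longrightarrow> y \<in> X \<Longrightarrow> s \<in> S x \<Longrightarrow> t \<in> S y \<Longrightarrow> \<alpha> x y s t \<in> S (m x y)"
    and beta_maps: "\<And>x s. x \<in> X \<Longrightarrow> s \<in> S x \<Longrightarrow> \<beta> x s \<in> S (\<rho> x)"
  shows "(symmetric_rack (Sigma X S) (ext_op m \<alpha>) (ext_inv \<rho> \<beta>) \<longleftrightarrow> ext_conditions X m \<rho> S \<alpha> \<beta>)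
       \<and> (symmetric_quandle X m \<rho> \<longrightarrow>
            (symmetric_quandle (Sigma X S) (ext_op m \<alpha>) (ext_inv \<rho> \<beta>) \<longleftrightarrow>
               ext_conditions X m \<rho> S \<alpha> \<beta> \<and> (\<forall>x\<in>X. \<forall>s\<in>S x. \<alpha> x x s s = s)))"
proof -
  have main: "symmetric_rack (Sigma X S) (ext_op m \<alpha>) (ext_inv \<rho> \<beta>) \<longleftrightarrow> ext_conditions X m \<rho> S \<alpha> \<beta>"
  proof
    assume "symmetric_rack (Sigma X S) (ext_op m \<alpha>) (ext_inv \<rho> \<beta>)"
    then show "ext_conditions X m \<rho> S \<alpha> \<beta>" using dir_forward[of X m \<rho> S \<alpha> \<beta>] sym alpha_maps beta_maps by blast
  next
    assume "ext_conditions X m \<rho> S \<alpha> \<beta>"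
    then show "symmetric_rack (Sigma X S) (ext_op m \<alpha>) (ext_inv \<rho> \<beta>)" using dir_backward[of X m \<rho> S \<alpha> \<beta>] sym alpha_maps beta_maps by blast
  qed
  have q: "symmetric_quandle (Sigma X S) (ext_op m \<alpha>) (ext_inv \<rho> \<beta>) \<longleftrightarrow>
               ext_conditions X m \<rho> S \<alpha> \<beta> \<and> (\<forall>x\<in>X. \<forall>s\<in>S x. \<alpha> x x s s = s)"
    if sq: "symmetric_quandle X m \<rho>"
  proof -
    have idX: "\<forall>x\<in>X. m x x = x" using sq unfolding symmetric_quandle_def quandle_def by (elim conjE)
    have idE: "(\<forall>p\<in>Sigma X S. ext_op m \<alpha> p p = p) \<longleftrightarrow> (\<forall>x\<in>X. \<forall>s\<in>S x. \<alpha> x x s s = s)"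
    proof
      assume h: "\<forall>p\<in>Sigma X S. ext_op m \<alpha> p p = p"
      show "\<forall>x\<in>X. \<forall>s\<in>S x. \<alpha> x x s s = s"
      proof (intro ballI)
        fix x s assume "x \<in> X" "s \<in> S x"
        then have "ext_op m \<alpha> (x,s) (x,s) = (x,s)" using h by simp
        then show "\<alpha> x x s s = s" unfolding ext_op_def by simp
      qed
    next
      assume h: "\<forall>x\<in>X. \<forall>s\<in>S x. \<alpha> x x s s = s"
      show "\<forall>p\<in>Sigma X S. ext_op m \<alpha> p p = p"
      proof
        fix p assume "p \<in> Sigma X S"
        then obtain x s where p: "p = (x,s)" "x \<in> X" "s \<in> S x" by blast
        have "m x x = x" using idX p(2) by simp
        moreover have "\<alpha> x x s s = s" using h p(2,3) by simp
        ultimately show "ext_op m \<alpha> p p = p" unfolding p ext_op_def by simp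
      qed
    qed
    have "symmetric_quandle (Sigma X S) (ext_op m \<alpha>) (ext_inv \<rho> \<beta>) \<longleftrightarrow>
          symmetric_rack (Sigma X S) (ext_op m \<alpha>) (ext_inv \<rho> \<beta>) \<and> (\<forall>p\<in>Sigma X S. ext_op m \<alpha> p p = p)"
      unfolding symmetric_quandle_def quandle_def symmetric_rack_def by blast
    then show ?thesis using main idE by simp
  qed
  show ?thesis using main q by blast
qed

end
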